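(* Let $(X,d)$ be a compact metric space, let $\{f_n\}_{n\in\mathbb{N}}$ be a sequence of homeomorphisms of $X$ and let $f$ be a homeomorphism of $X$ such that $f_n\to f$ uniformly and $f_n^{-1}\to f^{-1}$ uniformly on $X$. Then for $x\in X$: (1) $x\in U_f(X)$ if and only if there exists $\delta>0$ such that for every pair of distinct points $y,z\in B(x,\delta)$, $\bigcup_{m\ge 1}\bigcap_{n\ge m}E_z(f_n,y,\delta)\neq\emptyset$; (2) $x\in M_f(X)$ if and only if there exists $\delta>0$ such that for each $y\in B(x,\delta)$ and every pair of distinct points $u,v\in\overline{\mathcal{O}_f(y)}$, $\bigcup_{m\ge 1}\bigcap_{n\ge m}E_v(f_n,u,\delta)\neq\emptyset$.
   Context: For a homeomorphism $f$ of a compact metric space $(X,d)$: $B(x,\epsilon)=\{y: d(x,y)<\epsilon\}$, $\mathcal{O}_f(x)=\{f^n(x):n\in\mathbb{Z}\}$, and for $x,y\in X$, $\epsilon>0$, $E_y(f,x,\epsilon)=\{n\in\mathbb{Z}: d(f^n(x),f^n(y))>\epsilon\}$ (negative powers are iterates of $f^{-1}$). $f$ is expansive on a subset $A\subset X$ with expansivity constant $\mathfrak{c}>0$ if for every pair of distinct $x,y\in A$ there is $n\in\mathbb{Z}$ with $d(f^n(x),f^n(y))>\mathfrak{c}$. $U_f(X)$ is the set of points $x$ for which there is $\mathfrak{c}>0$ such that $f$ is expansive on $B(x,\mathfrak{c})$ with constant $\mathfrak{c}$. $M_f(X)$ is the set of points $x$ for which there is $\mathfrak{c}>0$ such that for every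 $y\in B(x,\mathfrak{c})$, $f$ is expansive on $\overline{\mathcal{O}_f(y)}$ with constant $\mathfrak{c}$. *)

theory Defs
  imports "HOL-Analysis.Analysis"
begin

definition zpow :: "('a \<Rightarrow> 'a) \<Rightarrow> int \<Rightarrow> 'a \<Rightarrow> 'a" where
  "zpow f n = (if 0 \<le> n then f ^^ nat n else inv f ^^ nat (- n))"

definition orbit :: "('a \<Rightarrow> 'a) \<Rightarrow> 'a \<Rightarrow> 'a set" where
  "orbit f x = {zpow f n x | n. True}"

definition Eset :: "('a \<Rightarrow> 'a) \<Rightarrow> 'a \<Rightarrow> 'a::metric_space \<Rightarrow> real \<Rightarrow> int set" where
  "Eset f y x eps = {n. dist (zpow f n x) (zpow f n y) > eps}"

definition expansive_on :: "('a::metric_space \<Rightarrow> 'a) \<Rightarrow> 'a set \<Rightarrow> real \<Rightarrow> bool" where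
  "expansive_on f A c \<longleftrightarrow> c > 0 \<and>
     (\<forall>x\<in>A. \<forall>y\<in>A. x \<noteq> y \<longrightarrow> (\<exists>n::int. dist (zpow f n x) (zpow f n y) > c))"

definition U_set :: "('a::metric_space \<Rightarrow> 'a) \<Rightarrow> 'a set" where
  "U_set f = {x. \<exists>c>0. expansive_on f (ball x c) c}"

definition M_set :: "('a::metric_space \<Rightarrow> 'a) \<Rightarrow> 'a set" where
  "M_set f = {x. \<exists>c>0. \<forall>y\<in>ball x c. expansive_on f (closure (orbit f y)) c}"

end

theory Submission
  imports Defs
begin

lemma conv_iter:
  fixes gs :: "nat \<Rightarrow> 'a::metric_space \<Rightarrow> 'a"
  assumes U: "uniform_limit UNIV gs g sequentially" and C: "continuous_on UNIV g"
  shows "(\<lambda>n. (gs n ^^ m) p) \<longlonglongrightarrow> (g ^^ m) p"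
proof (induction m)
  case 0
  then show ?case by simp
next
  case (Suc m)
  define a where "a = (\<lambda>n. (gs n ^^ m) p)"
  have A: "a \<longlonglongrightarrow> (g ^^ m) p" using Suc a_def by simp
  have G: "(\<lambda>n. g (a n)) \<longlonglongrightarrow> g ((g ^^ m) p)"
  proof -
    have "isCont g ((g ^^ m) p)" using C by (simp add: continuous_on_eq_continuous_at)
    then show ?thesis by (rule isCont_tendsto_compose[OF _ A])
  qed
  have "(\<lambda>n. gs n (a n)) \<longlonglongrightarrow> g ((g ^^ m) p)"
  proof (rule metric_LIMSEQ_I)
    fix e :: real assume e: "e > 0"
    have "eventually (\<lambda>n. \<forall>x\<in>UNIV. dist (gs n x) (g x) < e/2) sequentially"
      using U e by (intro uniform_limitD) auto
    then obtain N1 where N1: "\<And>n x. n \<ge> N1 \<Longrightarrow> dist (gs n x) (g x) < e/2"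
      by (auto simp: eventually_sequentially)
    obtain N2 where N2: "\<And>n. n \<ge> N2 \<Longrightarrow> dist (g (a n)) (g ((g ^^ m) p)) < e/2"
      using metric_LIMSEQ_D[OF G, of "e/2"] e by auto
    show "\<exists>N. \<forall>n\<ge>N. dist (gs n (a n)) (g ((g ^^ m) p)) < e"
    proof (intro exI allI impI)
      fix n assume "n \<ge> max N1 N2"
      then have "dist (gs n (a n)) (g (a n)) < e/2" "dist (g (a n)) (g ((g ^^ m) p)) < e/2"
        using N1 N2 by auto
      then show "dist (gs n (a n)) (g ((g ^^ m) p)) < e"
        using dist_triangle[of "gs n (a n)" "g ((g ^^ m) p)" "g (a n)"] by linarith
    qed
  qed
  then show ?case by (simp add: a_def)
qed

lemma conv_zpow:
  fixes fs :: "nat \<Rightarrow> 'a::metric_space \<Rightarrow> 'a"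
  assumes "homeomorphism UNIV UNIV f (inv f)"
    and "uniform_limit UNIV fs f sequentially"
    and "uniform_limit UNIV (\<lambda>n. inv (fs n)) (inv f) sequentially"
  shows "(\<lambda>n. zpow (fs n) k p) \<longlonglongrightarrow> zpow f k p"
proof -
  have c1: "continuous_on UNIV f" and c2: "continuous_on UNIV (inv f)"
    using assms(1) by (auto simp: homeomorphism_def)
  show ?thesis
  proof (cases "0 \<le> k")
    case True
    then show ?thesis unfolding zpow_def using conv_iter[OF assms(2) c1] by simp
  next
    case False
    then show ?thesis unfolding zpow_def using conv_iter[OF assms(3) c2] by simp
  qed
qed

lemma Eset_iff:
  "(\<Union>m\<in>{1..}. \<Inter>n\<in>{m..}. Eset (fs n) z y \<delta>) \<noteq> {} \<longleftrightarrow>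
   (\<exists>k. eventually (\<lambda>n. dist (zpow (fs n) k y) (zpow (fs n) k z) > \<delta>) sequentially)"
proof
  assume "(\<Union>m\<in>{1..}. \<Inter>n\<in>{m..}. Eset (fs n) z y \<delta>) \<noteq> {}"
  then show "\<exists>k. eventually (\<lambda>n. dist (zpow (fs n) k y) (zpow (fs n) k z) > \<delta>) sequentially"
    by (auto simp: Eset_def eventually_sequentially)
next
  assume "\<exists>k. eventually (\<lambda>n. dist (zpow (fs n) k y) (zpow (fs n) k z) > \<delta>) sequentially"
  then obtain k N where "\<And>n. n \<ge> N \<Longrightarrow> dist (zpow (fs n) k y) (zpow (fs n) k z) > \<delta>"
    by (auto simp: eventually_sequentially)
  then have "k \<in> (\<Inter>n\<in>{max N 1..}. Eset (fs n) z y \<delta>)" by (auto simp: Eset_def)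
  moreover have "max N 1 \<in> {1..}" by simp
  ultimately show "(\<Union>m\<in>{1..}. \<Inter>n\<in>{m..}. Eset (fs n) z y \<delta>) \<noteq> {}" by blast
qed

lemma dist_conv:
  fixes fs :: "nat \<Rightarrow> 'a::metric_space \<Rightarrow> 'a"
  assumes "homeomorphism UNIV UNIV f (inv f)"
    and "uniform_limit UNIV fs f sequentially"
    and "uniform_limit UNIV (\<lambda>n. inv (fs n)) (inv f) sequentially"
  shows "(\<lambda>n. dist (zpow (fs n) k y) (zpow (fs n) k z)) \<longlonglongrightarrow> dist (zpow f k y) (zpow f k z)"
  by (intro tendsto_dist conv_zpow[OF assms])

lemma key1:
  fixes fs :: "nat \<Rightarrow> 'a::metric_space \<Rightarrow> 'a"
  assumes "homeomorphism UNIV UNIV f (inv f)"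
    and "uniform_limit UNIV fs f sequentially"
    and "uniform_limit UNIV (\<lambda>n. inv (fs n)) (inv f) sequentially"
    and "dist (zpow f k y) (zpow f k z) > c"
  shows "(\<Union>m\<in>{1..}. \<Inter>n\<in>{m..}. Eset (fs n) z y c) \<noteq> {}"
  unfolding Eset_iff
  using order_tendstoD(1)[OF dist_conv[OF assms(1-3)] assms(4)] by blast

lemma key2:
  fixes fs :: "nat \<Rightarrow> 'a::metric_space \<Rightarrow> 'a"
  assumes "homeomorphism UNIV UNIV f (inv f)"
    and "uniform_limit UNIV fs f sequentially"
    and "uniform_limit UNIV (\<lambda>n. inv (fs n)) (inv f) sequentially"
    and "(\<Union>m\<in>{1..}. \<Inter>n\<in>{m..}. Eset (fs n) z y d) \<noteq> {}"
  shows "\<exists>k. dist (zpow f k y) (zpow f k z) \<ge> d"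
proof -
  obtain k where k: "eventually (\<lambda>n. dist (zpow (fs n) k y) (zpow (fs n) k z) > d) sequentially"
    using assms(4) unfolding Eset_iff by blast
  have "dist (zpow f k y) (zpow f k z) \<ge> d"
    by (rule tendsto_lowerbound[OF dist_conv[OF assms(1-3)]])
       (use k in \<open>auto elim: eventually_mono\<close>)
  then show ?thesis by blast
qed

theorem theorem2p4:
  fixes fs :: "nat \<Rightarrow> 'a::metric_space \<Rightarrow> 'a" and f :: "'a \<Rightarrow> 'a" and x :: 'a
  assumes "compact (UNIV :: 'a set)"
    and "\<And>n. homeomorphism UNIV UNIV (fs n) (inv (fs n))"
    and "homeomorphism UNIV UNIV f (inv f)"
    and "uniform_limit UNIV fs f sequentially"
    and "uniform_limit UNIV (\<lambda>n. inv (fs n)) (inv f) sequentially"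
  shows "(x \<in> U_set f \<longleftrightarrow>
            (\<exists>\<delta>>0. \<forall>y\<in>ball x \<delta>. \<forall>z\<in>ball x \<delta>. y \<noteq> z \<longrightarrow>
               (\<Union>m\<in>{1..}. \<Inter>n\<in>{m..}. Eset (fs n) z y \<delta>) \<noteq> {}))
       \<and> (x \<in> M_set f \<longleftrightarrow>
            (\<exists>\<delta>>0. \<forall>y\<in>ball x \<delta>. \<forall>u\<in>closure (orbit f y). \<forall>v\<in>closure (orbit f y). u \<noteq> v \<longrightarrow>
               (\<Union>m\<in>{1..}. \<Inter>n\<in>{m..}. Eset (fs n) v u \<delta>) \<noteq> {}))"
proof (intro conjI iffI)
  note K1 = key1[OF assms(3-5)] and K2 = key2[OF assms(3-5)]
  {
    assume "x \<in> U_set f"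
    then obtain c where c: "c > 0" "expansive_on f (ball x c) c" by (auto simp: U_set_def)
    show "\<exists>\<delta>>0. \<forall>y\<in>ball x \<delta>. \<forall>z\<in>ball x \<delta>. y \<noteq> z \<longrightarrow>
               (\<Union>m\<in>{1..}. \<Inter>n\<in>{m..}. Eset (fs n) z y \<delta>) \<noteq> {}"
    proof (intro exI[of _ c] conjI ballI impI)
      fix y z assume "y \<in> ball x c" "z \<in> ball x c" "y \<noteq> z"
      then obtain k where "dist (zpow f k y) (zpow f k z) > c"
        using c(2) unfolding expansive_on_def by blast
      then show "(\<Union>m\<in>{1..}. \<Inter>n\<in>{m..}. Eset (fs n) z y c) \<noteq> {}" by (rule K1)
    qed (use c in auto)
  next
    assume "\<exists>\<delta>>0. \<forall>y\<in>ball x \<delta>. \<forall>z\<in>ball x \<delta>. y \<noteq> z \<longrightarrow>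
               (\<Union>m\<in>{1..}. \<Inter>n\<in>{m..}. Eset (fs n) z y \<delta>) \<noteq> {}"
    then obtain d where d: "d > 0" "\<forall>y\<in>ball x d. \<forall>z\<in>ball x d. y \<noteq> z \<longrightarrow>
               (\<Union>m\<in>{1..}. \<Inter>n\<in>{m..}. Eset (fs n) z y d) \<noteq> {}" by blast
    have "expansive_on f (ball x (d/2)) (d/2)"
      unfolding expansive_on_def
    proof (intro conjI ballI impI)
      fix y z assume "y \<in> ball x (d/2)" "z \<in> ball x (d/2)" "y \<noteq> z"
      then have "y \<in> ball x d" "z \<in> ball x d" "y \<noteq> z"
        by auto (smt (verit) zero_le_dist)+
      then have "(\<Union>m\<in>{1..}. \<Inter>n\<in>{m..}. Eset (fs n) z y d) \<noteq> {}" using d(2) by simp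
      from K2[OF this] obtain k where "dist (zpow f k y) (zpow f k z) \<ge> d" by blast
      then show "\<exists>n. dist (zpow f n y) (zpow f n z) > d/2" using d by (intro exI[of _ k]) auto
    qed (use d in auto)
    moreover have "d/2 > 0" using d by simp
    ultimately show "x \<in> U_set f" unfolding U_set_def by blast
  next
    assume "x \<in> M_set f"
    then obtain c where c: "c > 0" "\<forall>y\<in>ball x c. expansive_on f (closure (orbit f y)) c"
      by (auto simp: M_set_def)
    show "\<exists>\<delta>>0. \<forall>y\<in>ball x \<delta>. \<forall>u\<in>closure (orbit f y). \<forall>v\<in>closure (orbit f y). u \<noteq> v \<longrightarrow>
               (\<Union>m\<in>{1..}. \<Inter>n\<in>{m..}. Eset (fs n) v u \<delta>) \<noteq> {}"
    proof (intro exI[of _ c] conjI ballI impI)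
      fix y u v assume "y \<in> ball x c" "u \<in> closure (orbit f y)" "v \<in> closure (orbit f y)" "u \<noteq> v"
      then obtain k where "dist (zpow f k u) (zpow f k v) > c"
        using c(2) unfolding expansive_on_def by blast
      then show "(\<Union>m\<in>{1..}. \<Inter>n\<in>{m..}. Eset (fs n) v u c) \<noteq> {}" by (rule K1)
    qed (use c in auto)
  next
    assume "\<exists>\<delta>>0. \<forall>y\<in>ball x \<delta>. \<forall>u\<in>closure (orbit f y). \<forall>v\<in>closure (orbit f y). u \<noteq> v \<longrightarrow>
               (\<Union>m\<in>{1..}. \<Inter>n\<in>{m..}. Eset (fs n) v u \<delta>) \<noteq> {}"
    then obtain d where d: "d > 0" "\<forall>y\<in>ball x d. \<forall>u\<in>closure (orbit f y). \<forall>v\<in>closure (orbit f y). u \<noteq> v \<longrightarrow>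
               (\<Union>m\<in>{1..}. \<Inter>n\<in>{m..}. Eset (fs n) v u d) \<noteq> {}" by (elim exE conjE) (rule that)
    have "\<forall>y\<in>ball x (d/2). expansive_on f (closure (orbit f y)) (d/2)"
    proof
      fix y assume y: "y \<in> ball x (d/2)"
      then have y': "y \<in> ball x d" by auto (smt (verit) zero_le_dist)
      show "expansive_on f (closure (orbit f y)) (d/2)"
        unfolding expansive_on_def
      proof (intro conjI ballI impI)
        fix u v assume "u \<in> closure (orbit f y)" "v \<in> closure (orbit f y)" "u \<noteq> v"
        then have "(\<Union>m\<in>{1..}. \<Inter>n\<in>{m..}. Eset (fs n) v u d) \<noteq> {}" using d(2) y' by simp
        from K2[OF this] obtain k where "dist (zpow f k u) (zpow f k v) \<ge> d" by blast
        then show "\<exists>n. dist (zpow f n u) (zpow f n v) > d/2" using d by (intro exI[of _ k]) auto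
      qed (use d in auto)
    qed
    moreover have "d/2 > 0" using d by simp
    ultimately show "x \<in> M_set f" unfolding M_set_def by blast
  }
qed

end
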